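(* For a metrizable topological group $G$, $G$ is NSS if and only if $G$ is STAP.
   Context: A topological group $G$ with neutral element $e$ is NSS if some neighborhood of $e$ contains no nontrivial subgroup of $G$. A sequence $(g_n)$ in $G$ is hyper-converging if $g_n^{m_n}\to e$ for every integer sequence $(m_n)$. $G$ is STAP if no sequence of pairwise distinct elements of $G$ is hyper-converging. *)

theory Defs
  imports "HOL-Algebra.Group" "HOL-Analysis.Analysis"
begin

definition topological_group :: "('a, 'b) monoid_scheme \<Rightarrow> 'a topology \<Rightarrow> bool" where
  "topological_group G X \<longleftrightarrow>
     group G \<and> topspace X = carrier G \<and>
     continuous_map (prod_topology X X) X (\<lambda>p. fst p \<otimes>\<^bsub>G\<^esub> snd p) \<and>
     continuous_map X X (\<lambda>x. inv\<^bsub>G\<^esub> x)"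

definition NSS :: "('a, 'b) monoid_scheme \<Rightarrow> 'a topology \<Rightarrow> bool" where
  "NSS G X \<longleftrightarrow>
     (\<exists>N. (\<exists>U. openin X U \<and> \<one>\<^bsub>G\<^esub> \<in> U \<and> U \<subseteq> N) \<and>
          (\<forall>H. subgroup H G \<and> H \<subseteq> N \<longrightarrow> H = {\<one>\<^bsub>G\<^esub>}))"

definition hyper_converging :: "('a, 'b) monoid_scheme \<Rightarrow> 'a topology \<Rightarrow> (nat \<Rightarrow> 'a) \<Rightarrow> bool" where
  "hyper_converging G X g \<longleftrightarrow>
     (\<forall>n. g n \<in> carrier G) \<and>
     (\<forall>m :: nat \<Rightarrow> int. limitin X (\<lambda>n. g n [^]\<^bsub>G\<^esub> m n) \<one>\<^bsub>G\<^esub> sequentially)"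

definition STAP :: "('a, 'b) monoid_scheme \<Rightarrow> 'a topology \<Rightarrow> bool" where
  "STAP G X \<longleftrightarrow> \<not> (\<exists>g. inj g \<and> hyper_converging G X g)"

end

theory Submission
  imports Defs "HOL-Algebra.Elementary_Groups"
begin

lemma nss_imp_stap:
  fixes G (structure)
  assumes grp: "group G" and N: "NSS G X"
  shows "STAP G X"
proof -
  interpret group G by (rule grp)
  obtain N U where U: "openin X U" "\<one> \<in> U" "U \<subseteq> N"
    and triv: "\<And>H. subgroup H G \<Longrightarrow> H \<subseteq> N \<Longrightarrow> H = {\<one>}"
    using N unfolding NSS_def by blast
  show ?thesis unfolding STAP_def
  proof
    assume "\<exists>g. inj g \<and> hyper_converging G X g"
    then obtain g where inj: "inj g" and car: "\<And>n. g n \<in> carrier G"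
      and lim: "\<And>m::nat\<Rightarrow>int. limitin X (\<lambda>n. g n [^] m n) \<one> sequentially"
      unfolding hyper_converging_def by blast
    define m where "m n = (if \<exists>k::int. g n [^] k \<notin> U then SOME k::int. g n [^] k \<notin> U else 0)" for n
    have "eventually (\<lambda>n. g n [^] m n \<in> U) sequentially"
      using lim[of m] U unfolding limitin_def by blast
    then obtain N0 where N0: "\<And>n. n \<ge> N0 \<Longrightarrow> g n [^] m n \<in> U"
      unfolding eventually_sequentially by blast
    have one: "g n = \<one>" if "n \<ge> N0" for n
    proof -
      have allU: "\<forall>k::int. g n [^] k \<in> U"
      proof (rule ccontr)
        assume "\<not> (\<forall>k::int. g n [^] k \<in> U)"
        then have ex: "\<exists>k::int. g n [^] k \<notin> U" by blast
        then have "g n [^] m n \<notin> U" unfolding m_def using someI_ex[OF ex] by simp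
        with N0[OF that] show False by blast
      qed
      have "range (\<lambda>k::int. g n [^] k) = {\<one>}"
        using triv[OF subgroup_of_powers[OF car[of n]]] allU U(3) by blast
      then have "g n [^] (1::int) = \<one>" by blast
      then show ?thesis using car[of n] by simp
    qed
    have "g N0 = g (Suc N0)" using one[of N0] one[of "Suc N0"] by simp
    with inj show False by (simp add: inj_eq)
  qed
qed

lemma stap_imp_nss:
  fixes G (structure)
  assumes grp: "group G" and top: "topspace X = carrier G"
    and met: "metrizable_space X" and S: "STAP G X"
  shows "NSS G X"
proof (rule ccontr)
  interpret group G by (rule grp)
  assume nN: "\<not> NSS G X"
  obtain M d where Md: "Metric_space M d" and XM: "X = Metric_space.mtopology M d"
    using met unfolding metrizable_space_def by blast
  interpret Metric_space M d by (rule Md)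
  have MG: "M = carrier G" using top XM by simp
  have small: "\<exists>x. x \<in> carrier G \<and> x \<noteq> \<one> \<and> (\<forall>k::int. x [^] k \<in> mball \<one> r)"
    if r: "r > 0" for r
  proof -
    have "\<exists>U. openin X U \<and> \<one> \<in> U \<and> U \<subseteq> mball \<one> r"
      proof -
      have "\<one> \<in> M" using MG by simp
      then show ?thesis using r unfolding XM by (intro exI[of _ "mball \<one> r"]) auto
    qed
    then obtain H where H: "subgroup H G" "H \<subseteq> mball \<one> r" "H \<noteq> {\<one>}"
      using nN unfolding NSS_def by blast
    then obtain x where x: "x \<in> H" "x \<noteq> \<one>"
      using subgroup.one_closed[OF H(1)] by blast
    show ?thesis
      using x H subgroup_int_pow_closed[OF H(1) x(1)] subgroup.mem_carrier[OF H(1) x(1)]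
      by blast
  qed
  define step where "step r = (SOME x. x \<in> carrier G \<and> x \<noteq> \<one> \<and> (\<forall>k::int. x [^] k \<in> mball \<one> r))" for r
  have step: "step r \<in> carrier G \<and> step r \<noteq> \<one> \<and> (\<forall>k::int. step r [^] k \<in> mball \<one> r)"
    if "r > 0" for r
    unfolding step_def using someI_ex[OF small[OF that]] .
  define rad where "rad n x = min (inverse (real n + 2)) (d x \<one>)" for n x
  define g where "g = rec_nat (step 1) (\<lambda>n x. step (rad n x))"
  have g0: "g 0 = step 1" and gS: "g (Suc n) = step (rad n (g n))" for n
    unfolding g_def by simp_all
  have P: "g n \<in> carrier G \<and> g n \<noteq> \<one> \<and> (\<forall>k::int. g n [^] k \<in> mball \<one> (inverse (real n + 1)))" for n
  proof (induction n)
    case 0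
    then show ?case using step[of 1] by (simp add: g0)
  next
    case (Suc n)
    have pos: "rad n (g n) > 0"
      using Suc MG unfolding rad_def by (auto intro: mdist_pos_less)
    have "mball \<one> (rad n (g n)) \<subseteq> mball \<one> (inverse (real (Suc n) + 1))"
      unfolding rad_def by (auto simp: add.commute)
    then show ?case using step[OF pos] unfolding gS by blast
  qed
  have dec: "d (g (Suc n)) \<one> < d (g n) \<one>" for n
  proof -
    have pos: "rad n (g n) > 0"
      using P[of n] MG unfolding rad_def by (auto intro: mdist_pos_less)
    have "g (Suc n) [^] (1::int) \<in> mball \<one> (rad n (g n))"
      using step[OF pos] unfolding gS by blast
    then have "g (Suc n) \<in> mball \<one> (rad n (g n))"
      using P[of "Suc n"] int_pow_1 by metis
    then have "d \<one> (g (Suc n)) < rad n (g n)"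
      using P[of "Suc n"] by simp
    then show ?thesis unfolding rad_def by (simp add: commute)
  qed
  have "strict_mono (\<lambda>n. - d (g n) \<one>)"
    by (rule strict_monoI_Suc) (use dec in auto)
  then have inj: "inj g"
    by (metis (mono_tags, lifting) injI neq_iff strict_mono_less)
  have hc: "hyper_converging G X g"
    unfolding hyper_converging_def
  proof (intro conjI allI)
    fix n show "g n \<in> carrier G" using P by blast
  next
    fix m :: "nat \<Rightarrow> int"
    show "limitin X (\<lambda>n. g n [^] m n) \<one> sequentially"
      unfolding XM limitin_metric
    proof (intro conjI allI impI)
      show "\<one> \<in> M" using MG by simp
      fix e :: real assume e: "e > 0"
      obtain N where N: "inverse (real N + 1) < e"
        using reals_Archimedean e
        by (metis add.commute of_nat_Suc)
      show "eventually (\<lambda>n. g n [^] m n \<in> M \<and> d (g n [^] m n) \<one> < e) sequentially"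
        unfolding eventually_sequentially
      proof (intro exI allI impI)
        fix n assume "N \<le> n"
        then have le: "inverse (real n + 1) \<le> inverse (real N + 1)"
          by (simp add: le_imp_inverse_le)
        have "g n [^] m n \<in> mball \<one> (inverse (real n + 1))" using P by blast
        then have "g n [^] m n \<in> M" "d \<one> (g n [^] m n) < inverse (real n + 1)" by auto
        then show "g n [^] m n \<in> M \<and> d (g n [^] m n) \<one> < e"
          using N le commute[of \<one> "g n [^] m n"] by linarith
      qed
    qed
  qed
  show False using S inj hc unfolding STAP_def by blast
qed

theorem theorem5p3:
  fixes G :: "('a, 'b) monoid_scheme" and X :: "'a topology"
  assumes "topological_group G X" and "metrizable_space X"
  shows "NSS G X \<longleftrightarrow> STAP G X"
  using assms nss_imp_stap stap_imp_nss unfolding topological_group_def by blast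

end
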